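(* Let $T[1..n]$ be a text and $\tau\ge1$ an integer. Suppose the first $i-1$ factors of the LZ-End+$\tau$ factorization of $T$ have been determined and the next factor starts at position $s_i$. If the $\tau$-far property holds for an index $j>s_i$, then it holds for $j-1$.
   Context: LZ-End+$\tau$ factorization: processed left to right starting with $i=1$. If $T[i]$ does not occur in $T[1..i-1]$, make $T[i]$ a new factor and set $i\gets i+1$. Otherwise, let $j$ be the largest index such that $T[i..j]$ has an earlier occurrence $T[k-(j-i)..k]=T[i..j]$ with $k<i$ where either $k$ is the last position of an earlier factor or $k-1\equiv 0\pmod\tau$; make $T[i..j]$ the next factor and set $i\gets j+1$. Potential factor: $T[s_i..h]$ is a potential factor if either $h=s_i$ and $T[s_i]$ is the leftmost occurrence of its symbol in $T$, or $T[s_i..h]=T[x..y]$ for some $x\le y<s_i$ such that $y$ is the last position of one of the already determined factors or $y-1\equiv 0\pmod\tau$. $\tau$-far property: it holds for an index $j\ge s_i$ if there exists $h$ with $s_i\le h$ and $j-\tau\le h\le j$ such that $T[s_i..h]$ is a potential factor. *)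

theory Defs
  imports Main
begin

text \<open>Texts are lists; positions are 1-indexed: position p of T is T ! (p - 1).\<close>

definition sub :: "'a list \<Rightarrow> nat \<Rightarrow> nat \<Rightarrow> 'a list" where
  "sub T a b = map (\<lambda>p. T ! (p - 1)) [a..<Suc b]"

definition next_end :: "'a list \<Rightarrow> nat \<Rightarrow> nat set \<Rightarrow> nat \<Rightarrow> nat" where
  "next_end T tau E i =
     (if (\<forall>p. 1 \<le> p \<and> p < i \<longrightarrow> T ! (p - 1) \<noteq> T ! (i - 1)) then i
      else (GREATEST j. i \<le> j \<and> j \<le> length T \<and>
              (\<exists>k. k < i \<and> j - i < k \<and> (k \<in> E \<or> (k - 1) mod tau = 0) \<and>
                   sub T i j = sub T (k - (j - i)) k)))"

fun lz_ends :: "'a list \<Rightarrow> nat \<Rightarrow> nat \<Rightarrow> nat list" where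
  "lz_ends T tau 0 = []"
| "lz_ends T tau (Suc m) =
     (let es = lz_ends T tau m;
          i = (if es = [] then 1 else last es + 1)
      in es @ [next_end T tau (set es) i])"

definition lz_start :: "'a list \<Rightarrow> nat \<Rightarrow> nat \<Rightarrow> nat" where
  "lz_start T tau m = (let es = lz_ends T tau m in if es = [] then 1 else last es + 1)"

definition potential_factor :: "'a list \<Rightarrow> nat \<Rightarrow> nat set \<Rightarrow> nat \<Rightarrow> nat \<Rightarrow> bool" where
  "potential_factor T tau E s h \<longleftrightarrow>
     (h = s \<and> 1 \<le> s \<and> s \<le> length T \<and> (\<forall>p. 1 \<le> p \<and> p < s \<longrightarrow> T ! (p - 1) \<noteq> T ! (s - 1)))
   \<or> (\<exists>x y. 1 \<le> x \<and> x \<le> y \<and> y < s \<and> s \<le> h \<and> h \<le> length T \<and>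
        sub T s h = sub T x y \<and> (y \<in> E \<or> (y - 1) mod tau = 0))"

definition tau_far :: "'a list \<Rightarrow> nat \<Rightarrow> nat set \<Rightarrow> nat \<Rightarrow> nat \<Rightarrow> bool" where
  "tau_far T tau E s j \<longleftrightarrow>
     (\<exists>h. s \<le> h \<and> j - tau \<le> h \<and> h \<le> j \<and> potential_factor T tau E s h)"

end

theory Submission
  imports Defs
begin

definition first_occ :: "'a list \<Rightarrow> nat \<Rightarrow> bool" where
  "first_occ T p \<longleftrightarrow> (\<forall>q. 1 \<le> q \<and> q < p \<longrightarrow> T ! (q - 1) \<noteq> T ! (p - 1))"

lemma sub_nth: "t < Suc b - a \<Longrightarrow> sub T a b ! t = T ! (a + t - 1)"
  unfolding sub_def by (simp del: upt_Suc)
lemma sub_len: "length (sub T a b) = Suc b - a"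
  by (auto simp add: sub_def)
lemma sub_take: "a \<le> b' \<Longrightarrow> b' \<le> b \<Longrightarrow> sub T a b' = take (Suc b' - a) (sub T a b)"
  unfolding sub_def by (simp del: upt_Suc add: take_map take_upt)

lemma sub_prefix:
  assumes "sub T a b = sub T c d" "a \<le> b'" "b' \<le> b" "c \<le> d" "a \<le> b"
  shows "sub T a b' = sub T c (c + (b' - a))"
proof -
  have l: "Suc b - a = Suc d - c" using arg_cong[OF assms(1), of length] by (simp add: sub_len)
  have A: "sub T a b' = take (Suc b' - a) (sub T c d)" using sub_take[where T=T, OF assms(2,3)] assms(1) by simp
  have d1: "c + (b' - a) \<le> d" using l assms by linarith
  have d2: "Suc (c + (b' - a)) - c = Suc b' - a" using assms by linarith
  have B: "sub T c (c + (b' - a)) = take (Suc b' - a) (sub T c d)"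
    using sub_take[where T=T, OF le_add1 d1] unfolding d2 .
  show ?thesis using A B by (rule trans[OF _ sym])
qed

lemma copy_not_first:
  assumes "sub T i j = sub T (k - (j - i)) k" "i \<le> p" "p \<le> j" "j - i < k" "k < i"
  shows "\<not> first_occ T p"
proof -
  have l: "Suc j - i = Suc k - (k - (j - i))" using arg_cong[OF assms(1), of length] unfolding sub_len .
  have t: "p - i < Suc j - i" using assms(2,3) by linarith
  have t2: "p - i < Suc k - (k - (j - i))" using t l by linarith
  have e1: "sub T i j ! (p - i) = T ! (i + (p - i) - 1)" using sub_nth[OF t] .
  have e2: "sub T (k - (j - i)) k ! (p - i) = T ! (k - (j - i) + (p - i) - 1)" using sub_nth[OF t2] .
  have "T ! (i + (p - i) - 1) = T ! (k - (j - i) + (p - i) - 1)"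
    using e1 e2 assms(1) by metis
  moreover have "i + (p - i) = p" using assms by linarith
  ultimately have eq: "T ! (p - 1) = T ! (k - (j - i) + (p - i) - 1)" by simp
  define q where "q = k - (j - i) + (p - i)"
  have q1: "1 \<le> q" and q2: "q < p" unfolding q_def using assms by linarith+
  show ?thesis
  proof
    assume "first_occ T p"
    then have "T ! (q - 1) \<noteq> T ! (p - 1)" using q1 q2 unfolding first_occ_def by blast
    then show False using eq unfolding q_def by simp
  qed
qed

lemma least_first:
  assumes "1 \<le> q" "q < s" "T ! (q - 1) = T ! (s - 1)"
  shows "\<exists>p. 1 \<le> p \<and> p \<le> q \<and> T ! (p - 1) = T ! (s - 1) \<and> first_occ T p"
proof -
  define P where "P = (\<lambda>r. 1 \<le> r \<and> T ! (r - 1) = T ! (s - 1))"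
  have Pq: "P q" using assms P_def by simp
  define p where "p = (LEAST r. P r)"
  have Pp: "P p" using LeastI[of P q] Pq p_def by simp
  have "p \<le> q" using Least_le[of P q] Pq p_def by simp
  moreover have "first_occ T p" unfolding first_occ_def
  proof (intro allI impI)
    fix r assume r: "1 \<le> r \<and> r < p"
    show "T ! (r - 1) \<noteq> T ! (p - 1)"
    proof
      assume "T ! (r - 1) = T ! (p - 1)"
      then have "P r" using Pp r P_def by simp
      then have "p \<le> r" using Least_le[of P r] p_def by simp
      then show False using r by simp
    qed
  qed
  ultimately show ?thesis using Pp P_def by auto
qed

lemma inv:
  "\<forall>p. 1 \<le> p \<and> p < lz_start T tau m \<and> p \<le> length T \<and> first_occ T p
      \<longrightarrow> p \<in> set (lz_ends T tau m)"
proof (induction m)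
  case 0
  then show ?case by (simp add: lz_start_def)
next
  case (Suc m)
  define es where "es = lz_ends T tau m"
  define i where "i = lz_start T tau m"
  have i_def2: "i = (if es = [] then 1 else last es + 1)" by (simp add: i_def es_def lz_start_def)
  define e where "e = next_end T tau (set es) i"
  have ends: "lz_ends T tau (Suc m) = es @ [e]"
    by (simp add: es_def e_def i_def2 Let_def)
  have st: "lz_start T tau (Suc m) = e + 1" unfolding lz_start_def Let_def ends by simp
  show ?case
  proof (intro allI impI)
    fix p assume p: "1 \<le> p \<and> p < lz_start T tau (Suc m) \<and> p \<le> length T \<and> first_occ T p"
    show "p \<in> set (lz_ends T tau (Suc m))"
    proof (cases "p < i")
      case True
      then have "p \<in> set es" using Suc.IH p unfolding es_def i_def by blast
      then show ?thesis using ends by simp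
    next
      case False
      show ?thesis
      proof (cases "\<forall>q. 1 \<le> q \<and> q < i \<longrightarrow> T ! (q - 1) \<noteq> T ! (i - 1)")
        case True
        then have "e = i" unfolding e_def next_end_def by (rule if_P)
        then show ?thesis using p st False ends by simp
      next
        case nf: False
        define P where "P = (\<lambda>j. i \<le> j \<and> j \<le> length T \<and>
              (\<exists>k. k < i \<and> j - i < k \<and> (k \<in> set es \<or> (k - 1) mod tau = 0) \<and>
                   sub T i j = sub T (k - (j - i)) k))"
        have eG: "e = (GREATEST j. P j)" unfolding e_def next_end_def P_def by (rule if_not_P[OF nf])
        have iT: "i \<le> length T" using False p by simp
        obtain q where q: "1 \<le> q" "q < i" "T ! (q - 1) = T ! (i - 1)" using nf by auto
        obtain q0 where q0: "1 \<le> q0" "q0 \<le> q" "T ! (q0 - 1) = T ! (i - 1)" "first_occ T q0"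
          using least_first[OF q] by blast
        have q0i: "q0 < i" "q0 \<le> length T" using q0 q iT by linarith+
        have "q0 \<in> set es" using Suc.IH q0 q0i unfolding es_def i_def by blast
        have "sub T i i = sub T q0 q0" using q0 by (simp add: sub_def)
        then have H: "q0 < i \<and> i - i < q0 \<and> (q0 \<in> set es \<or> (q0 - 1) mod tau = 0) \<and>
            sub T i i = sub T (q0 - (i - i)) q0" using q0i q0 \<open>q0 \<in> set es\<close> by simp
        have Pi: "P i" unfolding P_def using H iT by (intro conjI order_refl exI[of _ q0]) simp_all
        have bd: "\<forall>y. P y \<longrightarrow> y \<le> length T" by (simp add: P_def)
        have "P (Greatest P)" by (rule GreatestI_nat[of P i "length T", OF Pi]) (use bd in blast)
        then have Pe: "P e" using eG by simp
        then have ex: "\<exists>k. k < i \<and> e - i < k \<and> (k \<in> set es \<or> (k - 1) mod tau = 0) \<and>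
                   sub T i e = sub T (k - (e - i)) k" unfolding P_def by (rule conjunct2[OF conjunct2])
        then obtain k where k: "k < i" "e - i < k" "sub T i e = sub T (k - (e - i)) k"
          by (elim exE conjE) simp
        have pe: "i \<le> p" "p \<le> e" using False p st by linarith+
        have "\<not> first_occ T p"
          using copy_not_first[OF k(3) pe k(2) k(1)] .
        then show ?thesis using p by simp
      qed
    qed
  qed
qed

theorem lemma4:
  fixes T :: "'a list" and tau i j :: nat
  assumes "tau \<ge> 1" and "i \<ge> 1"
    and "lz_start T tau (i - 1) \<le> length T"
    and "j > lz_start T tau (i - 1)"
    and "tau_far T tau (set (lz_ends T tau (i - 1))) (lz_start T tau (i - 1)) j"
  shows "tau_far T tau (set (lz_ends T tau (i - 1))) (lz_start T tau (i - 1)) (j - 1)"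
proof -
  define s where "s = lz_start T tau (i - 1)"
  define E where "E = set (lz_ends T tau (i - 1))"
  obtain h where h: "s \<le> h" "j - tau \<le> h" "h \<le> j" "potential_factor T tau E s h"
    using assms(5) unfolding tau_far_def s_def E_def by blast
  show ?thesis
  proof (cases "h \<le> j - 1")
    case True
    then show ?thesis unfolding tau_far_def s_def[symmetric] E_def[symmetric]
      using h by (intro exI[of _ h]) auto
  next
    case False
    then have hj: "h = j" using h assms(4) by simp
    then have "h \<noteq> s" using assms(4) s_def by simp
    then have ex: "\<exists>x y. 1 \<le> x \<and> x \<le> y \<and> y < s \<and> s \<le> h \<and> h \<le> length T \<and>
        sub T s h = sub T x y \<and> (y \<in> E \<or> (y - 1) mod tau = 0)"
      using h(4) unfolding potential_factor_def by (elim disjE) simp_all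
    then obtain x y where xy: "1 \<le> x" "x \<le> y" "y < s" "s \<le> h" "h \<le> length T"
        "sub T s h = sub T x y" "y \<in> E \<or> (y - 1) mod tau = 0"
      by (elim exE conjE) simp
    have l: "Suc h - s = Suc y - x" using arg_cong[OF xy(6), of length] by (simp add: sub_len)
    have yx: "y - x = j - s" using l hj xy by simp
    have y2: "y \<ge> 2" using yx xy assms(4) s_def by simp
    define y' where "y' = y - 1 - ((y - 2) mod tau)"
    have m: "(y - 2) mod tau < tau" using assms(1) by simp
    have y'1: "(y' - 1) mod tau = 0"
    proof -
      have "y' - 1 = (y - 2) - (y - 2) mod tau" using y2 unfolding y'_def by simp
      then show ?thesis by (simp add: minus_mod_eq_mult_div)
    qed
    have y'b: "y' \<le> y - 1" "y - tau \<le> y'" using m y2 unfolding y'_def by auto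
    show ?thesis
    proof (cases "x \<le> y'")
      case True
      define h' where "h' = s + (y' - x)"
      have eq: "sub T s h' = sub T x y'"
        using sub_prefix[OF xy(6), of h'] xy True y'b yx hj unfolding h'_def by auto
      have "potential_factor T tau E s h'"
        unfolding potential_factor_def using xy True y'b eq y'1 yx hj h'_def
        by (intro disjI2 exI[of _ x] exI[of _ y']) auto
      moreover have "s \<le> h'" "j - 1 - tau \<le> h'" "h' \<le> j - 1"
        using True y'b yx hj xy assms(1) unfolding h'_def by auto
      ultimately show ?thesis unfolding tau_far_def s_def[symmetric] E_def[symmetric]
        by blast
    next
      case False
      have s1: "1 \<le> s" using xy by simp
      have "sub T s h ! 0 = sub T x y ! 0" using xy by simp
      then have tx: "T ! (x - 1) = T ! (s - 1)" using sub_nth[of 0 h s T] sub_nth[of 0 y x T] xy s1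
        by simp
      obtain p where p: "1 \<le> p" "p \<le> x" "T ! (p - 1) = T ! (s - 1)" "first_occ T p"
        using least_first[OF xy(1) _ tx] xy by auto
      have pE: "p \<in> E" using inv[of T tau "i - 1"] p xy s_def E_def assms(3) by auto
      have "sub T s s = sub T p p" using p by (simp add: sub_def)
      then have "potential_factor T tau E s s"
        unfolding potential_factor_def using p pE xy s_def assms(3)
        by (intro disjI2 exI[of _ p] exI[of _ p]) auto
      moreover have "j - 1 - tau \<le> s" "s \<le> j - 1"
        using False y'b yx assms(4) s_def by auto
      ultimately show ?thesis unfolding tau_far_def s_def[symmetric] E_def[symmetric]
        by blast
    qed
  qed
qed

end
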